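(* Let $n\geq1$ and $1\leq i<j\leq n$. In $M_n$, the left-lcm of $\rho_i$ and $\rho_j$ exists and equals $(\rho_1\rho_n)^{n-j+1}\rho_i=\rho_{n-j+i+1}(\rho_1\rho_n)^{n-j}\rho_j$.
   Context: $M_n$ denotes the monoid with generators $\rho_1,\dots,\rho_n$ and relations $\rho_1\rho_n\rho_i=\rho_{i+1}\rho_n$ for $1\leq i\leq n-1$. A left-lcm of $a,b$ is a common left-multiple of $a$ and $b$ (an element $xa=yb$) that right-divides every common left-multiple of $a$ and $b$. *)

theory Defs
  imports Main
begin

text \<open>Elements of the free monoid on generators rho_1..rho_n are words (lists of
indices in {1..n}); the monoid M_n is the quotient of the free monoid by the
congruence generated by the defining relations.\<close>

definition words :: "nat \<Rightarrow> nat list set" where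
  "words n = {w. set w \<subseteq> {1..n}}"

definition Mrels :: "nat \<Rightarrow> (nat list \<times> nat list) set" where
  "Mrels n = {([1, n, i], [i + 1, n]) | i. 1 \<le> i \<and> i \<le> n - 1}"

inductive Meq :: "nat \<Rightarrow> nat list \<Rightarrow> nat list \<Rightarrow> bool" for n where
  Meq_refl: "w \<in> words n \<Longrightarrow> Meq n w w"
| Meq_sym: "Meq n u v \<Longrightarrow> Meq n v u"
| Meq_trans: "Meq n u v \<Longrightarrow> Meq n v w \<Longrightarrow> Meq n u w"
| Meq_step: "(l, r) \<in> Mrels n \<Longrightarrow> x \<in> words n \<Longrightarrow> y \<in> words n \<Longrightarrow>
             Meq n (x @ l @ y) (x @ r @ y)"

definition right_divides :: "nat \<Rightarrow> nat list \<Rightarrow> nat list \<Rightarrow> bool" where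
  "right_divides n a c \<longleftrightarrow> (\<exists>x \<in> words n. Meq n c (x @ a))"

definition common_left_multiple :: "nat \<Rightarrow> nat list \<Rightarrow> nat list \<Rightarrow> nat list \<Rightarrow> bool" where
  "common_left_multiple n a b c \<longleftrightarrow> c \<in> words n \<and> right_divides n a c \<and> right_divides n b c"

definition is_left_lcm :: "nat \<Rightarrow> nat list \<Rightarrow> nat list \<Rightarrow> nat list \<Rightarrow> bool" where
  "is_left_lcm n a b c \<longleftrightarrow> common_left_multiple n a b c \<and>
     (\<forall>d. common_left_multiple n a b d \<longrightarrow> right_divides n c d)"

definition wpow :: "nat list \<Rightarrow> nat \<Rightarrow> nat list" where
  "wpow w k = concat (replicate k w)"

end

theory Submission
  imports Defs
begin

lemma words_app[simp]: "(a @ b \<in> words n) = (a \<in> words n \<and> b \<in> words n)"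
  by (auto simp: words_def)

lemma words_Cons[simp]: "(x # b \<in> words n) = (x \<in> {1..n} \<and> b \<in> words n)"
  by (auto simp: words_def)

lemma words_Nil[simp]: "[] \<in> words n"
  by (auto simp: words_def)

lemma wpow_Suc: "wpow w (Suc m) = w @ wpow w m"
  by (simp add: wpow_def)

lemma wpow_Suc2: "wpow w (Suc m) = wpow w m @ w"
  by (simp add: wpow_def replicate_append_same[symmetric] del: replicate_append_same)

lemma wpow_add: "wpow w (a + b) = wpow w a @ wpow w b"
  by (simp add: wpow_def replicate_add)

lemma wpow_0[simp]: "wpow w 0 = []"
  by (simp add: wpow_def)

lemma wpow_words: "1 \<le> n \<Longrightarrow> wpow [1, n] m \<in> words n"
  by (induction m) (auto simp: wpow_Suc)

lemma rep_words: "1 \<le> n \<Longrightarrow> replicate m n \<in> words n"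
  by (induction m) auto

lemma Meq_words: "Meq n u v \<Longrightarrow> u \<in> words n \<and> v \<in> words n"
  by (induction rule: Meq.induct) (auto simp: Mrels_def)

lemma Meq_sum: "Meq n u v \<Longrightarrow> sum_list u = sum_list v"
  by (induction rule: Meq.induct) (auto simp: Mrels_def)

lemma Meq_app_right: "Meq n u v \<Longrightarrow> c \<in> words n \<Longrightarrow> Meq n (u @ c) (v @ c)"
proof (induction rule: Meq.induct)
  case (Meq_refl w) then show ?case by (simp add: Meq.Meq_refl)
next
  case (Meq_sym u v) then show ?case by (simp add: Meq.Meq_sym)
next
  case (Meq_trans u v w) then show ?case by (meson Meq.Meq_trans)
next
  case (Meq_step l r x y)
  then have "Meq n (x @ l @ (y @ c)) (x @ r @ (y @ c))" by (intro Meq.Meq_step) auto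
  then show ?case by simp
qed

lemma Meq_app_left: "Meq n u v \<Longrightarrow> c \<in> words n \<Longrightarrow> Meq n (c @ u) (c @ v)"
proof (induction rule: Meq.induct)
  case (Meq_refl w) then show ?case by (simp add: Meq.Meq_refl)
next
  case (Meq_sym u v) then show ?case by (simp add: Meq.Meq_sym)
next
  case (Meq_trans u v w) then show ?case by (meson Meq.Meq_trans)
next
  case (Meq_step l r x y)
  then have "Meq n ((c @ x) @ l @ y) ((c @ x) @ r @ y)" by (intro Meq.Meq_step) auto
  then show ?case by simp
qed

lemma Meq_app: "Meq n u u' \<Longrightarrow> Meq n v v' \<Longrightarrow> Meq n (u @ v) (u' @ v')"
  by (meson Meq.Meq_trans Meq_app_left Meq_app_right Meq_words)

lemma Meq_refl': "w \<in> words n \<Longrightarrow> Meq n w w" by (rule Meq.Meq_refl)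

lemma K: "1 \<le> k \<Longrightarrow> k + m \<le> n \<Longrightarrow> Meq n (wpow [1,n] m @ [k]) ([k+m] @ replicate m n)"
proof (induction m arbitrary: k)
  case 0 then show ?case by (auto intro: Meq.Meq_refl)
next
  case (Suc m)
  have n1: "1 \<le> n" using Suc by simp
  have "([1, n, k], [k+1, n]) \<in> Mrels n" using Suc.prems by (auto simp: Mrels_def)
  then have "Meq n (wpow [1,n] m @ [1, n, k] @ []) (wpow [1,n] m @ [k+1, n] @ [])"
    using wpow_words[OF n1] by (intro Meq.Meq_step) auto
  then have 1: "Meq n (wpow [1,n] (Suc m) @ [k]) ((wpow [1,n] m @ [k+1]) @ [n])"
    by (simp add: wpow_Suc2)
  have "Meq n (wpow [1,n] m @ [k+1]) ([k+1+m] @ replicate m n)"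
    by (rule Suc.IH) (use Suc.prems in auto)
  then have "Meq n ((wpow [1,n] m @ [k+1]) @ [n]) (([k+1+m] @ replicate m n) @ [n])"
    using n1 by (intro Meq_app_right) auto
  moreover have "([k+1+m] @ replicate m n) @ [n] = [k + Suc m] @ replicate (Suc m) n"
    by (simp add: replicate_append_same)
  ultimately have 2: "Meq n ((wpow [1,n] m @ [k+1]) @ [n]) ([k + Suc m] @ replicate (Suc m) n)"
    by simp
  show ?case by (rule Meq.Meq_trans[OF 1 2])
qed

lemma Meq_tr[trans]: "Meq n a b \<Longrightarrow> Meq n b c \<Longrightarrow> Meq n a c"
  by (rule Meq.Meq_trans)

lemma Meq_mid: "Meq n a b \<Longrightarrow> p \<in> words n \<Longrightarrow> q \<in> words n \<Longrightarrow> Meq n (p @ a @ q) (p @ b @ q)"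
  by (simp add: Meq_app_left Meq_app_right)

definition Cw :: "nat \<Rightarrow> nat \<Rightarrow> nat \<Rightarrow> nat list" where
  "Cw n a b = (if a < b then wpow [1,n] (n - b + 1) else [n - a + b + 1] @ wpow [1,n] (n - a))"

definition Rel :: "nat \<Rightarrow> nat list \<Rightarrow> nat \<Rightarrow> nat list \<Rightarrow> nat \<Rightarrow> bool" where
  "Rel n u s v t = ((s = t \<longrightarrow> Meq n u v) \<and>
     (s \<noteq> t \<longrightarrow> (\<exists>w. Meq n u (w @ Cw n s t) \<and> Meq n v (w @ Cw n t s))))"

definition PH :: "nat \<Rightarrow> nat \<Rightarrow> bool" where
  "PH n W = (\<forall>u s v t. sum_list (u @ [s]) < W \<longrightarrow> Meq n (u @ [s]) (v @ [t]) \<longrightarrow> Rel n u s v t)"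

lemma Rel_sym: "Rel n u s v t \<Longrightarrow> Rel n v t u s"
  unfolding Rel_def by (metis Meq.Meq_sym)

lemma rcancel:
  assumes "PH n W"
  shows "Meq n (a @ c) (b @ c) \<Longrightarrow> sum_list (a @ c) < W \<Longrightarrow> Meq n a b"
proof (induction c rule: rev_induct)
  case Nil then show ?case by simp
next
  case (snoc q c)
  have "Meq n ((a @ c) @ [q]) ((b @ c) @ [q])" "sum_list ((a @ c) @ [q]) < W"
    using snoc.prems by auto
  then have "Rel n (a @ c) q (b @ c) q" using assms unfolding PH_def by blast
  then have "Meq n (a @ c) (b @ c)" unfolding Rel_def by simp
  moreover have "sum_list (a @ c) < W" using snoc.prems by simp
  ultimately show ?case using snoc.IH by blast
qed

lemma cube_a:
  assumes PH: "PH n W" and zW: "sum_list z < W" and o: "1 \<le> r" "r < s" "s < t" "t \<le> n"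
    and m1: "Meq n u (w @ Cw n s r)" and m2: "Meq n z (w @ Cw n r s)"
    and m3: "Meq n z (w' @ Cw n r t)" and m4: "Meq n v (w' @ Cw n t r)"
  shows "\<exists>W'. Meq n u (W' @ Cw n s t) \<and> Meq n v (W' @ Cw n t s)"
proof -
  obtain d where t: "t = s + Suc d" using less_imp_Suc_add[OF o(3)] by auto
  obtain e where ne: "n = t + e" using le_Suc_ex[OF o(4)] by blast
  have n1: "1 \<le> n" using o by simp
  let ?x = "wpow [1,n]"
  have ww: "w \<in> words n" "w' \<in> words n" using Meq_words[OF m2] Meq_words[OF m3] by auto
  have Crs: "Cw n r s = ?x (Suc d) @ ?x (Suc e)"
    using o t ne by (simp add: Cw_def wpow_add[symmetric])
  have Crt: "Cw n r t = ?x (Suc e)" using o t ne by (simp add: Cw_def)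
  have Csr: "Cw n s r = [d + e + r + 2] @ (?x d @ ?x (Suc e))"
    using o t ne by (simp add: Cw_def wpow_add[symmetric])
  have Cst: "Cw n s t = ?x (Suc e)" using o t ne by (simp add: Cw_def)
  have Ctr: "Cw n t r = [e + r + 1] @ ?x e" using o t ne by (simp add: Cw_def)
  have Cts: "Cw n t s = [e + s + 1] @ ?x e" using o t ne by (simp add: Cw_def)
  have "Meq n ((w @ ?x (Suc d)) @ ?x (Suc e)) z"
    using Meq.Meq_sym[OF m2] Crs by simp
  also have "Meq n z (w' @ ?x (Suc e))" using m3 Crt by simp
  finally have "Meq n ((w @ ?x (Suc d)) @ ?x (Suc e)) (w' @ ?x (Suc e))" .
  moreover have "sum_list ((w @ ?x (Suc d)) @ ?x (Suc e)) < W"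
    using Meq_sum[OF m2] zW Crs by simp
  ultimately have c: "Meq n (w @ ?x (Suc d)) w'" using rcancel[OF PH] by blast
  define W' where "W' = w @ [d + e + r + 2] @ ?x d"
  have u: "Meq n u (W' @ Cw n s t)" using m1 Csr Cst W'_def by simp
  have K1: "Meq n (?x (Suc d) @ [e + r + 1]) ([e + r + 1 + Suc d] @ replicate (Suc d) n)"
    by (rule K) (use o t ne in auto)
  have K2: "Meq n (?x d @ [e + s + 1]) ([e + s + 1 + d] @ replicate d n)"
    by (rule K) (use o t ne in auto)
  have ewords: "?x e \<in> words n" "[e + r + 1] \<in> words n" "[d + e + r + 2] \<in> words n"
    using wpow_words[OF n1] o t ne by auto
  have "Meq n v (w' @ [e + r + 1] @ ?x e)" using m4 Ctr by simp
  also have "Meq n (w' @ [e + r + 1] @ ?x e) ((w @ ?x (Suc d)) @ [e + r + 1] @ ?x e)"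
    using Meq_app_right[OF Meq.Meq_sym[OF c], of "[e + r + 1] @ ?x e"] ewords by simp
  finally have v1: "Meq n v ((w @ ?x (Suc d)) @ [e + r + 1] @ ?x e)" .
  have v2: "Meq n (w @ (?x (Suc d) @ [e + r + 1]) @ ?x e) (w @ ([e + r + 1 + Suc d] @ replicate (Suc d) n) @ ?x e)"
    using Meq_mid[OF K1] ww ewords by blast
  have v3: "Meq n (W' @ Cw n t s) (w @ [d + e + r + 2] @ ([e + s + 1 + d] @ replicate d n) @ ?x e)"
    using Meq_mid[OF K2, of "w @ [d + e + r + 2]" "?x e"] ww ewords Cts W'_def by simp
  have eq: "w @ ([e + r + 1 + Suc d] @ replicate (Suc d) n) @ ?x e
      = w @ [d + e + r + 2] @ ([e + s + 1 + d] @ replicate d n) @ ?x e"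
    using t ne by simp
  have "Meq n v (w @ (?x (Suc d) @ [e + r + 1]) @ ?x e)" using v1 by simp
  also note v2
  also note eq
  also note Meq.Meq_sym[OF v3]
  finally have "Meq n v (W' @ Cw n t s)" .
  then show ?thesis using u by blast
qed

lemma cube_b:
  assumes PH: "PH n W" and zW: "sum_list z < W" and o: "1 \<le> s" "s < r" "r < t" "t \<le> n"
    and m1: "Meq n u (w @ Cw n s r)" and m2: "Meq n z (w @ Cw n r s)"
    and m3: "Meq n z (w' @ Cw n r t)" and m4: "Meq n v (w' @ Cw n t r)"
  shows "\<exists>W'. Meq n u (W' @ Cw n s t) \<and> Meq n v (W' @ Cw n t s)"
proof -
  obtain f where r: "r = s + Suc f" using less_imp_Suc_add[OF o(2)] by auto
  obtain d where t: "t = r + Suc d" using less_imp_Suc_add[OF o(3)] by auto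
  obtain e where ne: "n = t + e" using le_Suc_ex[OF o(4)] by blast
  have n1: "1 \<le> n" using o by simp
  let ?x = "wpow [1,n]"
  have ww: "w \<in> words n" "w' \<in> words n" using Meq_words[OF m2] Meq_words[OF m3] by auto
  have Csr: "Cw n s r = ?x (Suc d) @ ?x (Suc e)"
    using o r t ne by (simp add: Cw_def wpow_add[symmetric])
  have Crs: "Cw n r s = [e + d + s + 2] @ (?x d @ ?x (Suc e))"
    using o r t ne by (simp add: Cw_def wpow_add[symmetric])
  have Crt: "Cw n r t = ?x (Suc e)" using o t ne by (simp add: Cw_def)
  have Cst: "Cw n s t = ?x (Suc e)" using o r t ne by (simp add: Cw_def)
  have Ctr: "Cw n t r = [e + r + 1] @ ?x e" using o t ne by (simp add: Cw_def)
  have Cts: "Cw n t s = [e + s + 1] @ ?x e" using o r t ne by (simp add: Cw_def)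
  have "Meq n ((w @ [e + d + s + 2] @ ?x d) @ ?x (Suc e)) z"
    using Meq.Meq_sym[OF m2] Crs by simp
  also have "Meq n z (w' @ ?x (Suc e))" using m3 Crt by simp
  finally have "Meq n ((w @ [e + d + s + 2] @ ?x d) @ ?x (Suc e)) (w' @ ?x (Suc e))" .
  moreover have "sum_list ((w @ [e + d + s + 2] @ ?x d) @ ?x (Suc e)) < W"
    using Meq_sum[OF m2] zW Crs by simp
  ultimately have c: "Meq n (w @ [e + d + s + 2] @ ?x d) w'" using rcancel[OF PH] by blast
  define W' where "W' = w @ ?x (Suc d)"
  have u: "Meq n u (W' @ Cw n s t)" using m1 Csr Cst W'_def by simp
  have K1: "Meq n (?x d @ [e + r + 1]) ([e + r + 1 + d] @ replicate d n)"
    by (rule K) (use o r t ne in auto)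
  have K2: "Meq n (?x (Suc d) @ [e + s + 1]) ([e + s + 1 + Suc d] @ replicate (Suc d) n)"
    by (rule K) (use o r t ne in auto)
  have ewords: "?x e \<in> words n" "[e + r + 1] \<in> words n" "[e + d + s + 2] \<in> words n"
    using wpow_words[OF n1] o r t ne by auto
  have "Meq n v (w' @ [e + r + 1] @ ?x e)" using m4 Ctr by simp
  also have "Meq n (w' @ [e + r + 1] @ ?x e) ((w @ [e + d + s + 2] @ ?x d) @ [e + r + 1] @ ?x e)"
    using Meq_app_right[OF Meq.Meq_sym[OF c], of "[e + r + 1] @ ?x e"] ewords by simp
  finally have v1: "Meq n v ((w @ [e + d + s + 2]) @ (?x d @ [e + r + 1]) @ ?x e)" by simp
  have v2: "Meq n ((w @ [e + d + s + 2]) @ (?x d @ [e + r + 1]) @ ?x e) ((w @ [e + d + s + 2]) @ ([e + r + 1 + d] @ replicate d n) @ ?x e)"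
    using Meq_mid[OF K1, of "w @ [e + d + s + 2]" "?x e"] ww ewords by simp
  have v3: "Meq n (W' @ Cw n t s) (w @ ([e + s + 1 + Suc d] @ replicate (Suc d) n) @ ?x e)"
    using Meq_mid[OF K2, of "w" "?x e"] ww ewords Cts W'_def by simp
  have eq: "(w @ [e + d + s + 2]) @ ([e + r + 1 + d] @ replicate d n) @ ?x e
      = w @ ([e + s + 1 + Suc d] @ replicate (Suc d) n) @ ?x e"
    using r t ne by simp
  have "Meq n v ((w @ [e + d + s + 2]) @ ([e + r + 1 + d] @ replicate d n) @ ?x e)"
    using v1 v2 by (rule Meq.Meq_trans)
  also note eq
  also note Meq.Meq_sym[OF v3]
  finally have "Meq n v (W' @ Cw n t s)" .
  then show ?thesis using u by blast
qed

lemma cube_c: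
  assumes PH: "PH n W" and zW: "sum_list z < W" and o: "1 \<le> s" "s < t" "t < r" "r \<le> n"
    and m1: "Meq n u (w @ Cw n s r)" and m2: "Meq n z (w @ Cw n r s)"
    and m3: "Meq n z (w' @ Cw n r t)" and m4: "Meq n v (w' @ Cw n t r)"
  shows "\<exists>W'. Meq n u (W' @ Cw n s t) \<and> Meq n v (W' @ Cw n t s)"
proof -
  obtain d where t: "t = s + Suc d" using less_imp_Suc_add[OF o(2)] by auto
  obtain f where r: "r = t + Suc f" using less_imp_Suc_add[OF o(3)] by auto
  obtain e where ne: "n = r + e" using le_Suc_ex[OF o(4)] by blast
  have n1: "1 \<le> n" using o by simp
  let ?x = "wpow [1,n]"
  have Crs: "Cw n r s = [e + s + 1] @ ?x e" using o t r ne by (simp add: Cw_def)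
  have Crt: "Cw n r t = [e + t + 1] @ ?x e" using o t r ne by (simp add: Cw_def)
  have Csr: "Cw n s r = ?x (Suc e)" using o t r ne by (simp add: Cw_def)
  have Ctr: "Cw n t r = ?x (Suc e)" using o t r ne by (simp add: Cw_def)
  have Cst: "Cw n s t = ?x (Suc f) @ ?x (Suc e)"
    using o t r ne by (simp add: Cw_def wpow_add[symmetric])
  have Cts: "Cw n t s = [f + e + s + 2] @ ?x f @ ?x (Suc e)"
    using o t r ne by (simp add: Cw_def wpow_add[symmetric])
  have C1: "Cw n (e + s + 1) (e + t + 1) = ?x (Suc f)" using o t r ne by (simp add: Cw_def)
  have C2: "Cw n (e + t + 1) (e + s + 1) = [f + e + s + 2] @ ?x f" using o t r ne by (simp add: Cw_def)
  have "Meq n ((w @ [e + s + 1]) @ ?x e) z"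
    using Meq.Meq_sym[OF m2] Crs by simp
  also have "Meq n z ((w' @ [e + t + 1]) @ ?x e)" using m3 Crt by simp
  finally have "Meq n ((w @ [e + s + 1]) @ ?x e) ((w' @ [e + t + 1]) @ ?x e)" .
  moreover have sl: "sum_list ((w @ [e + s + 1]) @ ?x e) < W"
    using Meq_sum[OF m2] zW Crs by simp
  ultimately have c: "Meq n (w @ [e + s + 1]) (w' @ [e + t + 1])" using rcancel[OF PH] by blast
  have "sum_list (w @ [e + s + 1]) < W" using sl by simp
  then have "Rel n w (e + s + 1) w' (e + t + 1)" using PH c unfolding PH_def by blast
  then obtain w0 where a: "Meq n w (w0 @ ?x (Suc f))" and b: "Meq n w' (w0 @ [f + e + s + 2] @ ?x f)"
    unfolding Rel_def using C1 C2 t by auto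
  have xw: "?x (Suc e) \<in> words n" using wpow_words[OF n1] .
  have "Meq n u (w @ ?x (Suc e))" using m1 Csr by simp
  also have "Meq n (w @ ?x (Suc e)) ((w0 @ ?x (Suc f)) @ ?x (Suc e))" using Meq_app_right[OF a xw] .
  finally have u: "Meq n u (w0 @ Cw n s t)" using Cst by simp
  have "Meq n v (w' @ ?x (Suc e))" using m4 Ctr by simp
  also have "Meq n (w' @ ?x (Suc e)) ((w0 @ [f + e + s + 2] @ ?x f) @ ?x (Suc e))" using Meq_app_right[OF b xw] .
  finally have v: "Meq n v (w0 @ Cw n t s)" using Cts by simp
  show ?thesis using u v by blast
qed

lemma cube:
  assumes PH: "PH n W" and zW: "sum_list z < W" and o: "s < t" "r \<noteq> s" "r \<noteq> t"
    "1 \<le> r" "1 \<le> s" "t \<le> n" "r \<le> n"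
    and m1: "Meq n u (w @ Cw n s r)" and m2: "Meq n z (w @ Cw n r s)"
    and m3: "Meq n z (w' @ Cw n r t)" and m4: "Meq n v (w' @ Cw n t r)"
  shows "\<exists>W'. Meq n u (W' @ Cw n s t) \<and> Meq n v (W' @ Cw n t s)"
proof -
  consider "r < s" | "s < r \<and> r < t" | "t < r" using o by linarith
  then show ?thesis
  proof cases
    case 1 then show ?thesis using cube_a[OF PH zW _ 1 o(1) o(6) m1 m2 m3 m4] o by simp
  next
    case 2 then show ?thesis using cube_b[OF PH zW _ _ _ o(6) m1 m2 m3 m4] o by simp
  next
    case 3 then show ?thesis using cube_c[OF PH zW _ o(1) 3 o(7) m1 m2 m3 m4] o by simp
  qed
qed

lemma Rel_trans_eq:
  assumes R1: "Rel n u s z s" and R2: "Rel n z s v t"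
  shows "Rel n u s v t"
proof -
  have uz: "Meq n u z" using R1 unfolding Rel_def by simp
  show ?thesis unfolding Rel_def
  proof (intro conjI impI)
    assume "s = t"
    then have "Meq n z v" using R2 unfolding Rel_def by simp
    then show "Meq n u v" using uz by (rule Meq.Meq_trans[rotated])
  next
    assume st: "s \<noteq> t"
    then obtain w where "Meq n z (w @ Cw n s t)" "Meq n v (w @ Cw n t s)"
      using R2 unfolding Rel_def by blast
    then show "\<exists>w. Meq n u (w @ Cw n s t) \<and> Meq n v (w @ Cw n t s)"
      using uz Meq.Meq_trans by blast
  qed
qed

lemma Rel_trans:
  assumes PH: "PH n W" and zW: "sum_list z < W"
    and rr: "r \<in> {1..n}" "s \<in> {1..n}" "t \<in> {1..n}"
    and R1: "Rel n u s z r" and R2: "Rel n z r v t"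
  shows "Rel n u s v t"
proof -
  consider "s = r" | "r = t" | "s = t \<and> s \<noteq> r" | "s \<noteq> r \<and> r \<noteq> t \<and> s < t" | "s \<noteq> r \<and> r \<noteq> t \<and> t < s"
    by linarith
  then show ?thesis
  proof cases
    case 1 then show ?thesis using Rel_trans_eq R1 R2 by blast
  next
    case 2
    have "Rel n v t z t" using Rel_sym[OF R2] 2 by simp
    then have "Rel n v t u s" using Rel_trans_eq Rel_sym[OF R1] 2 by blast
    then show ?thesis by (rule Rel_sym)
  next
    case 3
    then obtain w where a1: "Meq n u (w @ Cw n s r)" and a2: "Meq n z (w @ Cw n r s)"
      using R1 unfolding Rel_def by blast
    obtain w' where b1: "Meq n z (w' @ Cw n r s)" and b2: "Meq n v (w' @ Cw n s r)"
      using R2 3 unfolding Rel_def by auto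
    have "Meq n (w @ Cw n r s) (w' @ Cw n r s)" using Meq.Meq_sym[OF a2] b1 by (rule Meq.Meq_trans)
    moreover have "sum_list (w @ Cw n r s) < W" using Meq_sum[OF a2] zW by simp
    ultimately have ww: "Meq n w w'" using rcancel[OF PH] by blast
    have cw: "Cw n s r \<in> words n" using Meq_words[OF a1] by simp
    have "Meq n u (w @ Cw n s r)" by (rule a1)
    also have "Meq n (w @ Cw n s r) (w' @ Cw n s r)" using Meq_app_right[OF ww cw] .
    also have "Meq n (w' @ Cw n s r) v" using Meq.Meq_sym[OF b2] .
    finally show ?thesis using 3 unfolding Rel_def by simp
  next
    case 4
    obtain w where a1: "Meq n u (w @ Cw n s r)" and a2: "Meq n z (w @ Cw n r s)"
      using R1 4 unfolding Rel_def by auto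
    obtain w' where b1: "Meq n z (w' @ Cw n r t)" and b2: "Meq n v (w' @ Cw n t r)"
      using R2 4 unfolding Rel_def by auto
    have "\<exists>W'. Meq n u (W' @ Cw n s t) \<and> Meq n v (W' @ Cw n t s)"
      by (rule cube[OF PH zW _ _ _ _ _ _ _ a1 a2 b1 b2]) (use 4 rr in auto)
    then show ?thesis using 4 unfolding Rel_def by auto
  next
    case 5
    obtain w where a1: "Meq n u (w @ Cw n s r)" and a2: "Meq n z (w @ Cw n r s)"
      using R1 5 unfolding Rel_def by auto
    obtain w' where b1: "Meq n z (w' @ Cw n r t)" and b2: "Meq n v (w' @ Cw n t r)"
      using R2 5 unfolding Rel_def by auto
    have "\<exists>W'. Meq n v (W' @ Cw n t s) \<and> Meq n u (W' @ Cw n s t)"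
      by (rule cube[OF PH zW _ _ _ _ _ _ _ b2 b1 a2 a1]) (use 5 rr in auto)
    then show ?thesis using 5 unfolding Rel_def by auto
  qed
qed

lemma inner:
  assumes PH: "PH n W"
  shows "Meq n A B \<Longrightarrow> sum_list A = W \<Longrightarrow> (\<forall>u s v t. A = u @ [s] \<longrightarrow> B = v @ [t] \<longrightarrow> Rel n u s v t)"
proof (induction rule: Meq.induct)
  case (Meq_refl w)
  show ?case
  proof (intro allI impI)
    fix u s v t assume "w = u @ [s]" "w = v @ [t]"
    then show "Rel n u s v t" using Meq_refl.hyps unfolding Rel_def by (auto intro: Meq.Meq_refl)
  qed
next
  case (Meq_sym a b)
  have "sum_list a = W" using Meq_sum[OF Meq_sym.hyps(1)] Meq_sym.prems by simp
  then show ?case using Meq_sym.IH Rel_sym by blast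
next
  case (Meq_trans a b c)
  have sb: "sum_list b = W" using Meq_sum[OF Meq_trans.hyps(1)] Meq_trans.prems by simp
  show ?case
  proof (intro allI impI)
    fix u s v t assume au: "a = u @ [s]" and cv: "c = v @ [t]"
    have wa: "a \<in> words n" "b \<in> words n" "c \<in> words n"
      using Meq_words[OF Meq_trans.hyps(1)] Meq_words[OF Meq_trans.hyps(2)] by auto
    then have s1: "1 \<le> s" using au by simp
    have "W \<ge> s" using Meq_trans.prems au by simp
    then have "b \<noteq> []" using sb s1 by auto
    then obtain z r where bz: "b = z @ [r]" by (metis rev_exhaust)
    have R1: "Rel n u s z r" using Meq_trans.IH(1) Meq_trans.prems au bz by blast
    have R2: "Rel n z r v t" using Meq_trans.IH(2) sb cv bz by blast
    have rr: "r \<in> {1..n}" "s \<in> {1..n}" "t \<in> {1..n}" using wa au bz cv by auto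
    have "sum_list z < W" using sb bz rr by simp
    then show "Rel n u s v t" using Rel_trans[OF PH _ rr R1 R2] by blast
  qed
next
  case (Meq_step l rr x y)
  obtain i where lr: "l = [1, n, i]" "rr = [i + 1, n]" "1 \<le> i" "i \<le> n - 1"
    using Meq_step.hyps(1) unfolding Mrels_def by blast
  show ?case
  proof (intro allI impI)
    fix u s v t assume au: "x @ l @ y = u @ [s]" and cv: "x @ rr @ y = v @ [t]"
    show "Rel n u s v t"
    proof (cases y rule: rev_exhaust)
      case Nil
      then have u: "u = x @ [1, n]" "s = i" and v: "v = x @ [i + 1]" "t = n"
        using au cv lr by auto
      have xw: "x @ [1, n] \<in> words n" "x @ [i + 1] \<in> words n" using Meq_step.hyps lr by auto
      have "Cw n i n = [1, n]" using lr by (simp add: Cw_def wpow_def)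
      moreover have "Cw n n i = [i + 1]" using lr by (auto simp: Cw_def)
      ultimately show ?thesis unfolding Rel_def using u v lr xw
        by (auto intro!: exI[of _ x] Meq.Meq_refl)
    next
      case (snoc y' q)
      then have "u = x @ l @ y'" "s = q" "v = x @ rr @ y'" "t = q" using au cv by auto
      moreover have "Meq n (x @ l @ y') (x @ rr @ y')"
        using Meq_step.hyps snoc by (intro Meq.Meq_step) auto
      ultimately show ?thesis unfolding Rel_def by simp
    qed
  qed
qed

lemma PH_all: "PH n W"
proof (induction W)
  case 0 then show ?case unfolding PH_def by simp
next
  case (Suc W)
  show ?case unfolding PH_def
  proof (intro allI impI)
    fix u s v t assume a: "sum_list (u @ [s]) < Suc W" and m: "Meq n (u @ [s]) (v @ [t])"
    show "Rel n u s v t"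
    proof (cases "sum_list (u @ [s]) < W")
      case True then show ?thesis using Suc.IH m unfolding PH_def by blast
    next
      case False then have "sum_list (u @ [s]) = W" using a by simp
      then show ?thesis using inner[OF Suc.IH m] by blast
    qed
  qed
qed

theorem corollary4p13:
  fixes n i j :: nat
  assumes "1 \<le> n" and "1 \<le> i" and "i < j" and "j \<le> n"
  shows "is_left_lcm n [i] [j] (wpow [1, n] (n - j + 1) @ [i])
    \<and> Meq n (wpow [1, n] (n - j + 1) @ [i]) ([n - j + i + 1] @ wpow [1, n] (n - j) @ [j])"
proof -
  let ?x = "wpow [1, n]"
  let ?L = "?x (n - j + 1) @ [i]"
  have n1: "1 \<le> n" by fact
  have Lw: "?L \<in> words n" using wpow_words[OF n1] assms by auto
  have K1: "Meq n ?L ([i + (n - j + 1)] @ replicate (n - j + 1) n)"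
    by (rule K) (use assms in auto)
  have K2: "Meq n (?x (n - j) @ [j]) ([j + (n - j)] @ replicate (n - j) n)"
    by (rule K) (use assms in auto)
  have K2': "Meq n ([n - j + i + 1] @ ?x (n - j) @ [j]) ([n - j + i + 1] @ [j + (n - j)] @ replicate (n - j) n)"
    using Meq_app_left[OF K2, of "[n - j + i + 1]"] assms by simp
  have eq: "[i + (n - j + 1)] @ replicate (n - j + 1) n = [n - j + i + 1] @ [j + (n - j)] @ replicate (n - j) n"
    using assms by simp
  have E: "Meq n ?L ([n - j + i + 1] @ ?x (n - j) @ [j])"
    using Meq.Meq_trans[OF K1[unfolded eq] Meq.Meq_sym[OF K2']] .
  have cm: "common_left_multiple n [i] [j] ?L"
    unfolding common_left_multiple_def right_divides_def
  proof (intro conjI)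
    show "?L \<in> words n" by (rule Lw)
    show "\<exists>x\<in>words n. Meq n ?L (x @ [i])"
      using Lw wpow_words[OF n1] by (auto intro!: bexI[of _ "?x (n - j + 1)"] Meq.Meq_refl)
    show "\<exists>x\<in>words n. Meq n ?L (x @ [j])"
      using E wpow_words[OF n1] assms by (intro bexI[of _ "[n - j + i + 1] @ ?x (n - j)"]) auto
  qed
  have lcm: "\<forall>d. common_left_multiple n [i] [j] d \<longrightarrow> right_divides n ?L d"
  proof (intro allI impI)
    fix d assume "common_left_multiple n [i] [j] d"
    then obtain a b where da: "Meq n d (a @ [i])" and db: "Meq n d (b @ [j])"
      unfolding common_left_multiple_def right_divides_def by blast
    have "Meq n (a @ [i]) (b @ [j])" using Meq.Meq_sym[OF da] db by (rule Meq.Meq_trans)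
    then have "Rel n a i b j" using PH_all[of n "Suc (sum_list (a @ [i]))"] unfolding PH_def by blast
    then obtain w where aw: "Meq n a (w @ Cw n i j)" unfolding Rel_def using assms by auto
    have "Cw n i j = ?x (n - j + 1)" using assms by (simp add: Cw_def)
    then have aw': "Meq n a (w @ ?x (n - j + 1))" using aw by simp
    have ww: "w \<in> words n" using Meq_words[OF aw'] by simp
    have "Meq n d (a @ [i])" by (rule da)
    also have "Meq n (a @ [i]) ((w @ ?x (n - j + 1)) @ [i])"
      using Meq_app_right[OF aw', of "[i]"] assms by simp
    finally have "Meq n d (w @ ?L)" by simp
    then show "right_divides n ?L d" unfolding right_divides_def using ww by blast
  qed
  show ?thesis using cm lcm E unfolding is_left_lcm_def by blast
qed

end
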